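(* Let $\xi=(\xi_1,\xi_2)$ be a simple max-stable bivariate random vector with dependency set $K$. Let $C(u_1,u_2)=\exp\{-h(K,(-\log u_1,-\log u_2))\}$ be its copula, and let $\rho_S=12\int_0^1\int_0^1C(u_1,u_2)\,du_1du_2-3$ be its Spearman correlation coefficient. Then $$\rho_S=3\big(2V_2(L^o)-1\big),\qquad L=\tfrac12\big(K+[0,1]^2\big),$$ where $L^o=\{x\in[0,\infty)^2: h(L,x)\le1\}$, $V_2$ is area, and $+$ is Minkowski addition.
   Context: A simple max-stable random vector is max-stable with unit Fréchet marginals ($\mathbb{P}\{\xi_i\le t\}=e^{-1/t}$, $t>0$). Its dependency set is the compact convex set $K\subset[0,1]^2$ with $\mathbb{P}\{\xi\le x\}=\exp\{-h(K,(1/x_1,1/x_2))\}$ for $x\in(0,\infty)^2$. The support function is $h(K,x)=\sup_{y\in K}\langle y,x\rangle$, and $\tfrac12 M=\{\tfrac12 y:y\in M\}$. *)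

theory Defs
  imports "HOL-Probability.Probability"
begin

definition support_fun :: "(real \<times> real) set \<Rightarrow> real \<times> real \<Rightarrow> real" where
  "support_fun M x = (SUP y\<in>M. y \<bullet> x)"

definition joint_cdf :: "'a measure \<Rightarrow> ('a \<Rightarrow> real \<times> real) \<Rightarrow> real \<times> real \<Rightarrow> real" where
  "joint_cdf M \<xi> x = measure M {\<omega> \<in> space M. fst (\<xi> \<omega>) \<le> fst x \<and> snd (\<xi> \<omega>) \<le> snd x}"

text \<open>Max-stability, expressed through the distribution function F:
  for every n \<ge> 1 there are normalisations a_n > 0 and b_n (componentwise) such that
  the maximum of n i.i.d. copies, normalised, has the same law, i.e.
  F(a_n x + b_n)^n = F(x) for all x.\<close>
definition max_stable :: "'a measure \<Rightarrow> ('a \<Rightarrow> real \<times> real) \<Rightarrow> bool" where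
  "max_stable M \<xi> \<longleftrightarrow> (\<forall>n::nat. n \<ge> 1 \<longrightarrow>
     (\<exists>a1 a2 b1 b2::real. a1 > 0 \<and> a2 > 0 \<and>
        (\<forall>x1 x2. (joint_cdf M \<xi> (a1 * x1 + b1, a2 * x2 + b2)) ^ n = joint_cdf M \<xi> (x1, x2))))"

text \<open>Simple max-stable: max-stable with unit Fr\'echet marginals.\<close>
definition simple_max_stable :: "'a measure \<Rightarrow> ('a \<Rightarrow> real \<times> real) \<Rightarrow> bool" where
  "simple_max_stable M \<xi> \<longleftrightarrow> max_stable M \<xi> \<and>
     (\<forall>t>0. measure M {\<omega> \<in> space M. fst (\<xi> \<omega>) \<le> t} = exp (- 1 / t)) \<and>
     (\<forall>t>0. measure M {\<omega> \<in> space M. snd (\<xi> \<omega>) \<le> t} = exp (- 1 / t))"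

definition dependency_set :: "'a measure \<Rightarrow> ('a \<Rightarrow> real \<times> real) \<Rightarrow> (real \<times> real) set \<Rightarrow> bool" where
  "dependency_set M \<xi> K \<longleftrightarrow> compact K \<and> convex K \<and> K \<subseteq> {0..1} \<times> {0..1} \<and>
     (\<forall>x1>0. \<forall>x2>0. joint_cdf M \<xi> (x1, x2) = exp (- support_fun K (1 / x1, 1 / x2)))"

definition copula_of :: "(real \<times> real) set \<Rightarrow> real \<times> real \<Rightarrow> real" where
  "copula_of K u = exp (- support_fun K (- ln (fst u), - ln (snd u)))"

definition spearman_rho :: "(real \<times> real \<Rightarrow> real) \<Rightarrow> real" where
  "spearman_rho C = 12 * (LINT u : {0<..<1} \<times> {0<..<1} | lborel. C u) - 3"

definition minkowski_sum :: "(real \<times> real) set \<Rightarrow> (real \<times> real) set \<Rightarrow> (real \<times> real) set" where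
  "minkowski_sum A B = {a + b | a b. a \<in> A \<and> b \<in> B}"

definition polar_pos :: "(real \<times> real) set \<Rightarrow> (real \<times> real) set" where
  "polar_pos L = {x. 0 \<le> fst x \<and> 0 \<le> snd x \<and> support_fun L x \<le> 1}"

end

theory Submission
  imports Defs
begin

lemma sf_max:
  assumes "a \<in> M" "\<And>y. y \<in> M \<Longrightarrow> y \<bullet> x \<le> a \<bullet> x"
  shows "support_fun M x = a \<bullet> x"
  unfolding support_fun_def
  by (rule cSup_eq_maximum) (use assms in auto)

lemma sf_attain:
  assumes "compact K" "K \<noteq> {}"
  shows "\<exists>a\<in>K. \<forall>y\<in>K. y \<bullet> x \<le> a \<bullet> x"
  by (rule continuous_attains_sup) (use assms in \<open>auto intro!: continuous_intros\<close>)

lemma sf_hom: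
  assumes "compact K" "K \<noteq> {}" "c \<ge> 0"
  shows "support_fun K (c *\<^sub>R x) = c * support_fun K x"
proof -
  obtain a where a: "a \<in> K" "\<And>y. y \<in> K \<Longrightarrow> y \<bullet> x \<le> a \<bullet> x" using sf_attain[OF assms(1,2)] by blast
  have "support_fun K (c *\<^sub>R x) = a \<bullet> (c *\<^sub>R x)"
    by (rule sf_max) (use a assms(3) in \<open>auto intro: mult_left_mono\<close>)
  moreover have "support_fun K x = a \<bullet> x" by (rule sf_max) (use a in auto)
  ultimately show ?thesis by simp
qed

lemma sf_nonneg:
  assumes "compact K" "K \<noteq> {}" "K \<subseteq> {0..1} \<times> {0..1}" "0 \<le> fst x" "0 \<le> snd x"
  shows "0 \<le> support_fun K x"
proof -
  obtain a where a: "a \<in> K" "\<And>y. y \<in> K \<Longrightarrow> y \<bullet> x \<le> a \<bullet> x" using sf_attain[OF assms(1,2)] by blast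
  have "support_fun K x = a \<bullet> x" by (rule sf_max) (use a in auto)
  moreover have "0 \<le> a \<bullet> x" using a(1) assms(3-5)
    by (cases a, cases x) (auto simp: inner_Pair)
  ultimately show ?thesis by simp
qed

lemma sf_lip:
  assumes "compact K" "K \<noteq> {}" "K \<subseteq> {0..1} \<times> {0..1}"
  shows "support_fun K x - support_fun K y \<le> 2 * dist x y"
proof -
  obtain a where a: "a \<in> K" "\<And>z. z \<in> K \<Longrightarrow> z \<bullet> x \<le> a \<bullet> x" using sf_attain[OF assms(1,2)] by blast
  have hx: "support_fun K x = a \<bullet> x" by (rule sf_max) (use a in auto)
  have "a \<bullet> y \<le> support_fun K y" unfolding support_fun_def
    by (rule cSUP_upper) (use a(1) assms(1) in \<open>auto intro!: bounded_imp_bdd_above compact_imp_bounded compact_continuous_image continuous_intros\<close>)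
  moreover have "a \<bullet> x - a \<bullet> y \<le> 2 * dist x y"
  proof -
    have "a \<bullet> x - a \<bullet> y = a \<bullet> (x - y)" by (simp add: inner_diff_right)
    also have "\<dots> \<le> norm a * norm (x - y)" by (rule norm_cauchy_schwarz)
    also have "norm a \<le> 2"
    proof -
      have "norm a \<le> norm (fst a) + norm (snd a)" using norm_Pair_le[of "fst a" "snd a"] by simp
      thus ?thesis using a(1) assms(3) by (cases a) auto
    qed
    hence "norm a * norm (x - y) \<le> 2 * norm (x - y)" by (simp add: mult_right_mono)
    finally show ?thesis by (simp add: dist_norm)
  qed
  ultimately show ?thesis using hx by simp
qed

lemma sf_cont:
  assumes "compact K" "K \<noteq> {}" "K \<subseteq> {0..1} \<times> {0..1}"
  shows "continuous_on UNIV (support_fun K)"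
proof (rule lipschitz_on_continuous_on)
  show "2-lipschitz_on UNIV (support_fun K)"
    unfolding lipschitz_on_def
  proof (intro conjI ballI)
    fix x y :: "real \<times> real"
    show "dist (support_fun K x) (support_fun K y) \<le> 2 * dist x y"
      using sf_lip[OF assms, of x y] sf_lip[OF assms, of y x]
      by (simp add: dist_real_def dist_commute abs_le_iff)
  qed simp
qed

lemma sf_L:
  assumes "compact K" "K \<noteq> {}" "K \<subseteq> {0..1} \<times> {0..1}" "0 \<le> fst x" "0 \<le> snd x"
  shows "support_fun ((\<lambda>y. (1/2::real) *\<^sub>R y) ` minkowski_sum K ({0..1} \<times> {0..1})) x
     = (support_fun K x + fst x + snd x) / 2"
proof -
  obtain a where a: "a \<in> K" "\<And>y. y \<in> K \<Longrightarrow> y \<bullet> x \<le> a \<bullet> x" using sf_attain[OF assms(1,2)] by blast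
  have hx: "support_fun K x = a \<bullet> x" by (rule sf_max) (use a in auto)
  have "support_fun ((\<lambda>y. (1/2::real) *\<^sub>R y) ` minkowski_sum K ({0..1} \<times> {0..1})) x
     = ((1/2::real) *\<^sub>R (a + (1,1))) \<bullet> x"
  proof (rule sf_max)
    show "(1/2::real) *\<^sub>R (a + (1,1)) \<in> (\<lambda>y. (1/2::real) *\<^sub>R y) ` minkowski_sum K ({0..1} \<times> {0..1})"
    proof (rule imageI)
      show "a + (1,1) \<in> minkowski_sum K ({0..1} \<times> {0..1})" unfolding minkowski_sum_def
        by (rule CollectI, rule exI[of _ a], rule exI[of _ "(1,1)"]) (use a(1) in auto)
    qed
  next
    fix y assume "y \<in> (\<lambda>y. (1/2::real) *\<^sub>R y) ` minkowski_sum K ({0..1} \<times> {0..1})"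
    then obtain k q where kq: "k \<in> K" "q \<in> {0..1} \<times> {0..1}" "y = (1/2::real) *\<^sub>R (k + q)"
      unfolding minkowski_sum_def by auto
    have "q \<bullet> x \<le> (1,1) \<bullet> x" using kq(2) assms(4,5)
      by (cases q, cases x) (auto simp: inner_Pair intro!: add_mono mult_left_le_one_le)
    thus "y \<bullet> x \<le> ((1/2::real) *\<^sub>R (a + (1,1))) \<bullet> x"
      using a(2)[OF kq(1)] kq(3) by (simp add: inner_add_left)
  qed
  also have "\<dots> = (support_fun K x + fst x + snd x) / 2"
    using hx by (cases x) (simp add: inner_add_left inner_Pair)
  finally show ?thesis .
qed


lemma prob_N: "prob_space (density lborel (indicator {0<..<1::real}))"
  by (rule prob_spaceI) (simp add: emeasure_restricted)

lemma dist_exp: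
  "distr (density lborel (indicator {0<..<1::real})) borel (\<lambda>u. - ln u)
     = density lborel (\<lambda>x. ennreal (exponential_density 1 x))"
proof (rule cdf_unique)
  let ?N = "density lborel (indicator {0<..<1::real})"
  interpret N: prob_space ?N by (rule prob_N)
  show "real_distribution (distr ?N borel (\<lambda>u. - ln u))"
    by (auto simp: real_distribution_def real_distribution_axioms_def intro!: N.prob_space_distr)
  show "real_distribution (density lborel (\<lambda>x. ennreal (exponential_density 1 x)))"
    by (auto simp: real_distribution_def real_distribution_axioms_def intro!: prob_space_exponential_density)
  show "cdf (distr ?N borel (\<lambda>u. - ln u)) = cdf (density lborel (\<lambda>x. ennreal (exponential_density 1 x)))"
  proof
    fix x :: real
    have "cdf (distr ?N borel (\<lambda>u. - ln u)) x = measure ?N ((\<lambda>u. - ln u) -` {..x})"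
      by (simp add: cdf_def measure_distr)
    also have "\<dots> = measure lborel ({0<..<1} \<inter> (\<lambda>u. - ln u) -` {..x})"
    proof (rule measure_restricted)
      show "{0<..<1::real} \<in> sets lborel" by simp
      have "(\<lambda>u. - ln u) -` {..x} = {u \<in> space borel. - ln u \<le> x}" by auto
      also have "\<dots> \<in> sets borel" by measurable
      finally show "(\<lambda>u. - ln u) -` {..x} \<in> sets lborel" by simp
    qed
    also have "\<dots> = (if 0 \<le> x then 1 - exp (- x) else 0)"
    proof (cases "0 \<le> x")
      case True
      have "{0<..<1} \<inter> (\<lambda>u. - ln u) -` {..x} = {exp (-x)..<1}"
      proof (intro equalityI subsetI)
        fix u :: real assume "u \<in> {0<..<1} \<inter> (\<lambda>u. - ln u) -` {..x}"
        hence uu: "u \<in> {0<..<1}" "- ln u \<le> x" by auto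
        hence "-x \<le> ln u" by linarith
        hence "exp (-x) \<le> exp (ln u)" by (simp only: exp_le_cancel_iff)
        moreover have "exp (ln u) = u" using uu by simp
        ultimately show "u \<in> {exp (-x)..<1}" using uu by simp
      next
        fix u :: real assume "u \<in> {exp (-x)..<1}"
        hence u: "exp (-x) \<le> u" "u < 1" by auto
        have u0: "0 < u" using exp_gt_zero[of "-x"] u by linarith
        have "ln (exp (-x)) \<le> ln u" using u(1) u0 by (smt (verit) exp_gt_zero ln_le_cancel_iff)
        thus "u \<in> {0<..<1} \<inter> (\<lambda>u. - ln u) -` {..x}" using u u0 by auto
      qed
      thus ?thesis using True by (simp add: measure_def)
    next
      case False
      have "{0<..<1} \<inter> (\<lambda>u. - ln u) -` {..x} = {}"
        using False by (auto simp: ln_ge_iff) (smt (verit) ln_less_zero)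
      thus ?thesis using False by simp
    qed
    also have "\<dots> = cdf (density lborel (\<lambda>x. ennreal (exponential_density 1 x))) x"
      by (simp add: cdf_def measure_def emeasure_erlang_density erlang_CDF_0)
    finally show "cdf (distr ?N borel (\<lambda>u. - ln u)) x = cdf (density lborel (\<lambda>x. ennreal (exponential_density 1 x))) x" .
  qed
qed

lemma exp_tail:
  "(\<integral>\<^sup>+r. ennreal (exp (- r)) * indicator {a..} r \<partial>lborel) = ennreal (exp (- a))"
proof -
  have "(\<integral>\<^sup>+r. ennreal (exp (- r)) * indicator {a..} r \<partial>lborel)
      = ennreal \<bar>1\<bar> * (\<integral>\<^sup>+r. ennreal (exp (- (a + 1 * r))) * indicator {a..} (a + 1 * r) \<partial>lborel)"
    by (rule nn_integral_real_affine) auto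
  also have "\<dots> = (\<integral>\<^sup>+r. ennreal (exp (- a)) * (ennreal (r ^ 0 * exp (- r)) * indicator {0..} r) \<partial>lborel)"
    by (auto intro!: nn_integral_cong simp: exp_diff ennreal_mult' [symmetric] exp_minus field_simps split: split_indicator)
  also have "\<dots> = ennreal (exp (- a))"
    by (subst nn_integral_cmult, simp, subst nn_intergal_power_times_exp_Ici, simp)
  finally show ?thesis .
qed


lemma stepB:
  fixes h :: "real \<times> real \<Rightarrow> real"
  assumes hm[measurable]: "h \<in> borel_measurable borel"
  shows "(\<integral>\<^sup>+u. ennreal (indicator ({0<..<1} \<times> {0<..<1}) u * exp (- h (- ln (fst u), - ln (snd u)))) \<partial>lborel)
       = (\<integral>\<^sup>+t. ennreal (indicator {t. 0 \<le> fst t \<and> 0 \<le> snd t} t * exp (- (h t + fst t + snd t))) \<partial>lborel)"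
proof -
  let ?I = "{0<..<1::real}"
  let ?N = "density lborel (indicator ?I) :: real measure"
  let ?D = "density lborel (\<lambda>x. ennreal (exponential_density 1 x))"
  let ?nl = "\<lambda>u::real. - ln u"
  have sfN: "sigma_finite_measure ?N"
    using prob_N by (rule prob_space_imp_sigma_finite)
  have sfD: "sigma_finite_measure ?D"
    using prob_space_exponential_density[of 1] by (intro prob_space_imp_sigma_finite) simp
  have sfdN: "sigma_finite_measure (distr ?N borel ?nl)"
    using sfD by (simp add: dist_exp)
  have hm2[measurable]: "h \<in> borel_measurable (borel \<Otimes>\<^sub>M borel)"
    by (simp add: borel_prod)
  have "(\<integral>\<^sup>+u. ennreal (indicator (?I \<times> ?I) u * exp (- h (- ln (fst u), - ln (snd u)))) \<partial>lborel)
      = (\<integral>\<^sup>+u. (\<lambda>(x,y). indicator ?I x * indicator ?I y) u * ennreal (exp (- h (- ln (fst u), - ln (snd u)))) \<partial>(lborel \<Otimes>\<^sub>M lborel))"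
    by (subst lborel_prod) (auto intro!: nn_integral_cong split: split_indicator)
  also have "\<dots> = (\<integral>\<^sup>+u. ennreal (exp (- h (- ln (fst u), - ln (snd u)))) \<partial>density (lborel \<Otimes>\<^sub>M lborel) (\<lambda>(x,y). indicator ?I x * indicator ?I y))"
    by (subst nn_integral_density) auto
  also have "\<dots> = (\<integral>\<^sup>+u. ennreal (exp (- h (- ln (fst u), - ln (snd u)))) \<partial>(?N \<Otimes>\<^sub>M ?N))"
    by (subst pair_measure_density) (auto intro: sfN lborel.sigma_finite_measure_axioms)
  also have "\<dots> = (\<integral>\<^sup>+t. ennreal (exp (- h t)) \<partial>distr (?N \<Otimes>\<^sub>M ?N) (borel \<Otimes>\<^sub>M borel) (\<lambda>(x,y). (?nl x, ?nl y)))"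
    by (subst nn_integral_distr) (auto simp: case_prod_beta)
  also have "distr (?N \<Otimes>\<^sub>M ?N) (borel \<Otimes>\<^sub>M borel) (\<lambda>(x,y). (?nl x, ?nl y)) = distr ?N borel ?nl \<Otimes>\<^sub>M distr ?N borel ?nl"
    by (rule pair_measure_distr[symmetric]) (auto intro: sfdN)
  also have "\<dots> = ?D \<Otimes>\<^sub>M ?D" by (simp add: dist_exp)
  also have "\<dots> = density (lborel \<Otimes>\<^sub>M lborel) (\<lambda>(x,y). ennreal (exponential_density 1 x) * ennreal (exponential_density 1 y))"
    by (rule pair_measure_density) (auto intro: sfD lborel.sigma_finite_measure_axioms)
  also have "(\<integral>\<^sup>+t. ennreal (exp (- h t)) \<partial>density (lborel \<Otimes>\<^sub>M lborel) (\<lambda>(x,y). ennreal (exponential_density 1 x) * ennreal (exponential_density 1 y)))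
     = (\<integral>\<^sup>+t. (\<lambda>(x,y). ennreal (exponential_density 1 x) * ennreal (exponential_density 1 y)) t * ennreal (exp (- h t)) \<partial>(lborel \<Otimes>\<^sub>M lborel))"
    by (subst nn_integral_density) auto
  also have "\<dots> = (\<integral>\<^sup>+t. ennreal (indicator {t. 0 \<le> fst t \<and> 0 \<le> snd t} t * exp (- (h t + fst t + snd t))) \<partial>lborel)"
    by (subst lborel_prod[symmetric])
       (auto intro!: nn_integral_cong simp: exponential_density_def ennreal_mult'[symmetric] mult_exp_exp split: split_indicator)
  finally show ?thesis .
qed


lemma scaling:
  fixes f :: "real \<times> real \<Rightarrow> ennreal"
  assumes [measurable]: "f \<in> borel_measurable borel" and c: "0 < c"
  shows "(\<integral>\<^sup>+x. f x \<partial>lborel) = ennreal (c^2) * (\<integral>\<^sup>+x. f (c *\<^sub>R x) \<partial>lborel)"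
proof -
  have eq: "lborel = density (distr lborel borel (\<lambda>x::real\<times>real. 0 + c *\<^sub>R x)) (\<lambda>_. ennreal (\<bar>c\<bar>^DIM(real \<times> real)))"
    by (rule lborel_affine) (use c in auto)
  have "(\<integral>\<^sup>+x. f x \<partial>lborel) = (\<integral>\<^sup>+x. f x \<partial>density (distr lborel borel (\<lambda>x::real\<times>real. 0 + c *\<^sub>R x)) (\<lambda>_. ennreal (\<bar>c\<bar>^DIM(real \<times> real))))"
    by (rule arg_cong[where f="\<lambda>M. \<integral>\<^sup>+x. f x \<partial>M", OF eq])
  also have "\<dots> = (\<integral>\<^sup>+x. ennreal (c^2) * f (c *\<^sub>R x) \<partial>lborel)"
    using c by (simp add: nn_integral_density nn_integral_distr power2_eq_square)
  also have "\<dots> = ennreal (c^2) * (\<integral>\<^sup>+x. f (c *\<^sub>R x) \<partial>lborel)"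
    by (rule nn_integral_cmult) simp
  finally show ?thesis .
qed

lemma stepC:
  fixes h :: "real \<times> real \<Rightarrow> real"
  assumes hm[measurable]: "h \<in> borel_measurable borel"
    and nonneg: "\<And>t. 0 \<le> fst t \<Longrightarrow> 0 \<le> snd t \<Longrightarrow> 0 \<le> h t"
    and hom: "\<And>c x. 0 < c \<Longrightarrow> h (c *\<^sub>R x) = c * h x"
  shows "(\<integral>\<^sup>+t. ennreal (indicator {t. 0 \<le> fst t \<and> 0 \<le> snd t} t * exp (- (h t + fst t + snd t))) \<partial>lborel)
     = ennreal (1/2) * emeasure lborel {t. (0 \<le> fst t \<and> 0 \<le> snd t) \<and> h t + fst t + snd t \<le> 2}"
proof -
  define T where "T = {t::real\<times>real. 0 \<le> fst t \<and> 0 \<le> snd t}"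
  define g where "g t = h t + fst t + snd t" for t
  define P where "P = {t. t \<in> T \<and> g t \<le> 2}"
  define V where "V = emeasure lborel P"
  have hm2[measurable]: "h \<in> borel_measurable (borel \<Otimes>\<^sub>M borel)" by (simp add: borel_prod)
  have "g \<in> borel_measurable (borel \<Otimes>\<^sub>M borel)" unfolding g_def by measurable
  hence gm[measurable]: "g \<in> borel_measurable borel" by (simp add: borel_prod)
  have "T = {0..} \<times> {0..}" by (auto simp: T_def)
  hence "closed T" by (simp add: closed_Times)
  hence Tm[measurable]: "T \<in> sets borel" by (rule borel_closed)
  have Pm[measurable]: "P \<in> sets borel" unfolding P_def by measurable
  have g0: "fst t + snd t \<le> g t" if "t \<in> T" for t
    using nonneg[of t] that by (auto simp: g_def T_def)
  have ghom: "g (c *\<^sub>R x) = c * g x" if "0 < c" for c x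
    using hom[OF that, of x] by (simp add: g_def algebra_simps)
  define H where "H p = ennreal (exp (- snd p)) * indicator T (fst p) * (if g (fst p) \<le> snd p then 1 else 0)"
    for p :: "(real \<times> real) \<times> real"
  have "H \<in> borel_measurable (borel \<Otimes>\<^sub>M borel)"
    unfolding H_def by measurable
  hence Hm: "H \<in> borel_measurable (lborel \<Otimes>\<^sub>M lborel)"
    by (simp cong: measurable_cong_sets)
  have inner1: "(\<integral>\<^sup>+r. H (t, r) \<partial>lborel) = ennreal (indicator T t * exp (- g t))" for t
  proof -
    have "(\<integral>\<^sup>+r. H (t, r) \<partial>lborel) = (\<integral>\<^sup>+r. indicator T t * (ennreal (exp (- r)) * indicator {g t..} r) \<partial>lborel)"
      by (auto intro!: nn_integral_cong simp: H_def split: split_indicator)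
    also have "\<dots> = indicator T t * ennreal (exp (- g t))"
      by (subst nn_integral_cmult) (auto simp: exp_tail)
    finally show ?thesis by (simp split: split_indicator)
  qed
  have inner2: "(\<integral>\<^sup>+t. H (t, r) \<partial>lborel) = ennreal (r^2 * exp (- r)) * indicator {0..} r * (ennreal (1/4) * V)"
    if "r \<noteq> 0" for r
  proof (cases "r < 0")
    case True
    have "H (t, r) = 0" for t
      using g0[of t] True by (auto simp: H_def T_def split: split_indicator)
    thus ?thesis using True by simp
  next
    case False
    hence r: "0 < r" using that by simp
    have "(\<integral>\<^sup>+t. H (t, r) \<partial>lborel) = ennreal (exp (- r)) * (\<integral>\<^sup>+t. indicator T t * (if g t \<le> r then 1 else 0) \<partial>lborel)"
      unfolding H_def by (subst nn_integral_cmult[symmetric]) (auto simp: mult.assoc)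
    also have "(\<integral>\<^sup>+t. indicator T t * (if g t \<le> r then 1 else 0) \<partial>lborel)
        = ennreal ((r/2)^2) * (\<integral>\<^sup>+t. indicator T ((r/2) *\<^sub>R t) * (if g ((r/2) *\<^sub>R t) \<le> r then 1 else 0) \<partial>lborel)"
      by (rule scaling) (use r in auto)
    also have "(\<integral>\<^sup>+t. indicator T ((r/2) *\<^sub>R t) * (if g ((r/2) *\<^sub>R t) \<le> r then 1 else 0) \<partial>lborel)
        = (\<integral>\<^sup>+t. indicator P t \<partial>lborel)"
    proof (intro nn_integral_cong)
      fix t :: "real \<times> real"
      have "(r/2) *\<^sub>R t \<in> T \<longleftrightarrow> t \<in> T" using r
        by (cases t) (auto simp: T_def zero_le_mult_iff)
      moreover have "g ((r/2) *\<^sub>R t) \<le> r \<longleftrightarrow> g t \<le> 2"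
        unfolding ghom[of "r/2" t, OF half_gt_zero[OF r]]
        using mult_le_cancel_left_pos[of "r/2" "g t" 2] r by simp
      ultimately show "indicator T ((r/2) *\<^sub>R t) * (if g ((r/2) *\<^sub>R t) \<le> r then 1 else 0) = (indicator P t :: ennreal)"
        by (auto simp: P_def split: split_indicator)
    qed
    also have "(\<integral>\<^sup>+t. indicator P t \<partial>lborel) = V" by (simp add: V_def)
    finally have X: "(\<integral>\<^sup>+t. H (t, r) \<partial>lborel) = ennreal (exp (- r)) * (ennreal ((r/2)^2) * V)" .
    have Y: "ennreal (exp (- r)) * ennreal ((r/2)^2) = ennreal (r^2 * exp (- r)) * ennreal (1/4)"
    proof -
      have "ennreal (exp (- r)) * ennreal ((r/2)^2) = ennreal (exp (- r) * (r/2)^2)"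
        by (rule ennreal_mult[symmetric]) auto
      also have "exp (- r) * (r/2)^2 = (r^2 * exp (- r)) * (1/4)" by (simp add: power_divide)
      also have "ennreal \<dots> = ennreal (r^2 * exp (- r)) * ennreal (1/4)"
        by (rule ennreal_mult) auto
      finally show ?thesis .
    qed
    have "ennreal (exp (- r)) * (ennreal ((r/2)^2) * V) = (ennreal (exp (- r)) * ennreal ((r/2)^2)) * V"
      by (simp only: mult.assoc)
    also have "\<dots> = ennreal (r^2 * exp (- r)) * indicator {0..} r * (ennreal (1/4) * V)"
      unfolding Y using r by (simp add: mult.assoc)
    finally show ?thesis using X by simp
  qed
  have "(\<integral>\<^sup>+t. ennreal (indicator T t * exp (- g t)) \<partial>lborel) = (\<integral>\<^sup>+t. \<integral>\<^sup>+r. H (t, r) \<partial>lborel \<partial>lborel)"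
    by (simp add: inner1)
  also have "\<dots> = (\<integral>\<^sup>+r. \<integral>\<^sup>+t. H (t, r) \<partial>lborel \<partial>lborel)"
    by (rule lborel_pair.Fubini'[symmetric]) (use Hm in simp)
  also have "\<dots> = (\<integral>\<^sup>+r. ennreal (r^2 * exp (- r)) * indicator {0..} r * (ennreal (1/4) * V) \<partial>lborel)"
    by (rule nn_integral_cong_AE) (use AE_lborel_singleton[of 0] inner2 in auto)
  also have "\<dots> = (\<integral>\<^sup>+r. ennreal (r^2 * exp (- r)) * indicator {0..} r \<partial>lborel) * (ennreal (1/4) * V)"
    by (rule nn_integral_multc) simp
  also have "\<dots> = ennreal 2 * (ennreal (1/4) * V)"
    by (subst nn_intergal_power_times_exp_Ici) simp
  also have "\<dots> = ennreal (1/2) * V"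
    by (subst mult.assoc[symmetric], subst ennreal_mult[symmetric]) auto
  finally show ?thesis by (simp add: T_def g_def V_def P_def)
qed


theorem mainTheorem12:
  fixes M :: "'a measure" and \<xi> :: "'a \<Rightarrow> real \<times> real" and K :: "(real \<times> real) set"
  assumes "prob_space M"
    and "\<xi> \<in> borel_measurable M"
    and "simple_max_stable M \<xi>"
    and "dependency_set M \<xi> K"
  shows "spearman_rho (copula_of K) =
    3 * (2 * measure lborel (polar_pos ((\<lambda>y. (1/2::real) *\<^sub>R y) ` minkowski_sum K ({0..1} \<times> {0..1}))) - 1)"
proof -
  interpret M: prob_space M by (rule assms(1))
  have xim1[measurable]: "(\<lambda>\<omega>. fst (\<xi> \<omega>)) \<in> borel_measurable M"
    by (rule measurable_compose[OF assms(2)]) (intro borel_measurable_continuous_onI continuous_intros)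
  have Kc: "compact K" and Ksub: "K \<subseteq> {0..1} \<times> {0..1}"
    and cdfK: "\<And>x1 x2. x1 > 0 \<Longrightarrow> x2 > 0 \<Longrightarrow> joint_cdf M \<xi> (x1, x2) = exp (- support_fun K (1 / x1, 1 / x2))"
    using assms(4) unfolding dependency_set_def by auto
  have marg: "\<And>t. t > 0 \<Longrightarrow> measure M {\<omega> \<in> space M. fst (\<xi> \<omega>) \<le> t} = exp (- 1 / t)"
    using assms(3) unfolding simple_max_stable_def by auto
  have Kne: "K \<noteq> {}"
  proof
    assume K0: "K = {}"
    define s where "s = Sup ({} :: real set)"
    have sf: "support_fun K x = s" for x unfolding support_fun_def K0 s_def by simp
    define x1 where "x1 = 1 / (\<bar>s\<bar> + 1)"
    have x1: "x1 > 0" unfolding x1_def by (simp add: add_pos_nonneg)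
    have "exp (- s) = joint_cdf M \<xi> (x1, 1)" using cdfK[OF x1, of 1] sf by simp
    also have "\<dots> \<le> measure M {\<omega> \<in> space M. fst (\<xi> \<omega>) \<le> x1}"
      unfolding joint_cdf_def by (rule M.finite_measure_mono) (auto, measurable)
    also have "\<dots> = exp (- 1 / x1)" by (rule marg[OF x1])
    also have "\<dots> = exp (- (\<bar>s\<bar> + 1))" unfolding x1_def by simp
    finally have "exp (- s) \<le> exp (- (\<bar>s\<bar> + 1))" .
    thus False by simp
  qed
  define h where "h = support_fun K"
  have hc: "continuous_on UNIV h" unfolding h_def by (rule sf_cont[OF Kc Kne Ksub])
  have hm[measurable]: "h \<in> borel_measurable borel" by (rule borel_measurable_continuous_onI[OF hc])
  have hnn: "\<And>t. 0 \<le> fst t \<Longrightarrow> 0 \<le> snd t \<Longrightarrow> 0 \<le> h t"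
    unfolding h_def by (rule sf_nonneg[OF Kc Kne Ksub])
  have hhom: "\<And>c x. 0 < c \<Longrightarrow> h (c *\<^sub>R x) = c * h x"
    unfolding h_def by (rule sf_hom[OF Kc Kne]) simp
  define P where "P = {t::real\<times>real. (0 \<le> fst t \<and> 0 \<le> snd t) \<and> h t + fst t + snd t \<le> 2}"
  have Peq: "polar_pos ((\<lambda>y. (1/2::real) *\<^sub>R y) ` minkowski_sum K ({0..1} \<times> {0..1})) = P"
  proof (intro set_eqI)
    fix x :: "real \<times> real"
    show "x \<in> polar_pos ((\<lambda>y. (1/2::real) *\<^sub>R y) ` minkowski_sum K ({0..1} \<times> {0..1})) \<longleftrightarrow> x \<in> P"
    proof (cases "0 \<le> fst x \<and> 0 \<le> snd x")
      case True
      have eq: "support_fun ((\<lambda>y. (1/2::real) *\<^sub>R y) ` minkowski_sum K ({0..1} \<times> {0..1})) x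
          = (h x + fst x + snd x) / 2"
        unfolding h_def using sf_L[OF Kc Kne Ksub] True by blast
      show ?thesis
      proof
        assume "x \<in> polar_pos ((\<lambda>y. (1/2::real) *\<^sub>R y) ` minkowski_sum K ({0..1} \<times> {0..1}))"
        hence "support_fun ((\<lambda>y. (1/2::real) *\<^sub>R y) ` minkowski_sum K ({0..1} \<times> {0..1})) x \<le> 1"
          unfolding polar_pos_def by blast
        hence "h x + fst x + snd x \<le> 2" unfolding eq by (simp add: field_simps)
        thus "x \<in> P" unfolding P_def using True by blast
      next
        assume "x \<in> P"
        hence "h x + fst x + snd x \<le> 2" unfolding P_def by blast
        hence "support_fun ((\<lambda>y. (1/2::real) *\<^sub>R y) ` minkowski_sum K ({0..1} \<times> {0..1})) x \<le> 1"
          unfolding eq by (simp add: field_simps)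
        thus "x \<in> polar_pos ((\<lambda>y. (1/2::real) *\<^sub>R y) ` minkowski_sum K ({0..1} \<times> {0..1}))"
          unfolding polar_pos_def using True by blast
      qed
    next
      case False
      thus ?thesis unfolding polar_pos_def P_def by blast
    qed
  qed
  have "bounded P"
  proof (rule bounded_subset)
    show "bounded (cbox ((0::real),(0::real)) (2,2))" by (rule bounded_cbox)
    show "P \<subseteq> cbox (0,0) (2,2)"
    proof
      fix t assume "t \<in> P"
      thus "t \<in> cbox (0,0) (2,2)" using hnn[of t]
        by (cases t) (auto simp: P_def cbox_Pair_iff cbox_interval)
    qed
  qed
  hence Pfin: "emeasure lborel P < \<infinity>" by (rule emeasure_bounded_finite)
  have Cm[measurable]: "copula_of K \<in> borel_measurable lborel"
  proof -
    have "(\<lambda>u::real\<times>real. exp (- h (- ln (fst u), - ln (snd u)))) \<in> borel_measurable (borel \<Otimes>\<^sub>M borel)"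
    proof -
      have hm2[measurable]: "h \<in> borel_measurable (borel \<Otimes>\<^sub>M borel)" by (simp add: borel_prod)
      show ?thesis by measurable
    qed
    thus ?thesis unfolding copula_of_def h_def by (simp add: borel_prod)
  qed
  have "(LINT u : {0<..<1} \<times> {0<..<1} | lborel. copula_of K u)
      = enn2real (\<integral>\<^sup>+u. ennreal (indicator ({0<..<1} \<times> {0<..<1}) u * copula_of K u) \<partial>lborel)"
  proof -
    have Am: "{0<..<1::real} \<times> {0<..<1::real} \<in> sets lborel"
      by (simp add: borel_open open_Times)
    have meas: "(\<lambda>u. indicator ({0<..<1} \<times> {0<..<1}) u *\<^sub>R copula_of K u) \<in> borel_measurable lborel"
      by (intro borel_measurable_scaleR borel_measurable_indicator Am Cm)
    have nn: "AE u in lborel. 0 \<le> indicator ({0<..<1} \<times> {0<..<1}) u *\<^sub>R copula_of K u"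
      by (auto simp: copula_of_def)
    show ?thesis
      unfolding set_lebesgue_integral_def integral_eq_nn_integral[OF meas nn] by simp
  qed
  also have "(\<integral>\<^sup>+u. ennreal (indicator ({0<..<1} \<times> {0<..<1}) u * copula_of K u) \<partial>lborel)
      = (\<integral>\<^sup>+u. ennreal (indicator ({0<..<1} \<times> {0<..<1}) u * exp (- h (- ln (fst u), - ln (snd u)))) \<partial>lborel)"
    by (simp add: copula_of_def h_def)
  also have "\<dots> = (\<integral>\<^sup>+t. ennreal (indicator {t. 0 \<le> fst t \<and> 0 \<le> snd t} t * exp (- (h t + fst t + snd t))) \<partial>lborel)"
    by (rule stepB[OF hm])
  also have "\<dots> = ennreal (1/2) * emeasure lborel P"
    unfolding P_def by (rule stepC[OF hm hnn hhom])
  finally have eq1: "(LINT u : {0<..<1} \<times> {0<..<1} | lborel. copula_of K u) = enn2real (ennreal (1/2) * emeasure lborel P)" .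
  have "enn2real (ennreal (1/2) * emeasure lborel P) = 1/2 * measure lborel P"
    unfolding enn2real_mult measure_def by (subst enn2real_ennreal) auto
  with eq1 have "(LINT u : {0<..<1} \<times> {0<..<1} | lborel. copula_of K u) = 1/2 * measure lborel P"
    by simp
  thus ?thesis unfolding spearman_rho_def Peq by simp
qed

end
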